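(* Let $\Gamma$ be an oriented hypergraph with $A\neq\mathbf 0$ and strong coloring number $\chi=\chi(\Gamma)$, and suppose $\chi=\dfrac{\lambda_N-\lambda_1}{1-\lambda_1}$. Let $g$ be any eigenfunction of $L$ with eigenvalue $\lambda_N$, and let $V_1,\dots,V_\chi$ be the color classes of any proper strong $\chi$-coloring. Then: (1) $\operatorname{supp}(g)\cap V_i\neq\varnothing$ for all $1\le i\le\chi$; (2) $S^g_{ij}<0$ for all $1\le i<j\le\chi$; (3) for all $1\le i<j\le\chi$, $\mathrm{RQ}(g_{ij})=\lambda_1=\dfrac{\chi-\lambda_N}{\chi-1}$, and $g_{ij}$ is an eigenfunction of $L$ with eigenvalue $\lambda_1$. Consequently the multiplicity $m_\Gamma(\lambda_1)$ of $\lambda_1=(\chi-\lambda_N)/(\chi-1)$ is at least $\chi-1$, and this inequality is strict if $m_\Gamma(\lambda_N)>1$.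
   Context: An oriented hypergraph $\Gamma=(V,E,\varphi)$ consists of a finite vertex set $V$ with $|V|=N$, an edge set $E\subseteq\mathcal P(V)$, and a function $\varphi\colon V\times E\to\{-1,0,1\}$ with $\varphi(v,e)\neq 0$ iff $v\in e$. Two vertices $v,w\in e$ are co-oriented in $e$ if $\varphi(v,e)=\varphi(w,e)$ and anti-oriented in $e$ if $\varphi(v,e)=-\varphi(w,e)$. The degree is $\deg v=|\{e\in E: v\in e\}|$; we assume every vertex has degree at least $1$, and $D=\mathrm{diag}(\deg v)_{v\in V}$. The adjacency matrix $A$ is the $N\times N$ matrix with $A_{v,v}=0$ and, for $v\neq w$, $A_{v,w}=(\#\text{edges in which } v,w \text{ are anti-oriented})-(\#\text{edges in which } v,w \text{ are co-oriented})$. The normalized Laplacian is $L=\mathrm{Id}-D^{-1}A$; it is self-adjoint for $\langle f,g\rangle=\sum_{v}\deg v\, f(v)g(v)$ on functions $V\to\mathbb R$, with (real) eigenvalues $\lambda_1\le\dots\le\lambda_N$; $m_\Gamma(\lambda)$ denotes the multiplicity of $\lambda$. The Rayleigh quotient of $f\neq0$ is $\mathrm{RQ}(f)=\langle Lf,f\rangle/\langle f,f\rangle$. A proper strong $k$-coloring is a map $V\to\{1,\dots,k\}$ such that any two distinct vertices in a common edge receive different colors; $\chi(\Gamma)$ is the least such $k$. For a function $g\colon V\to\mathbb R$ and color classes $V_1,\dots,V_\chi$, define $S^g_{ij}=\sum_{v\in V_i,\,w\in V_j}A_{v,w}g(v)g(w)$, and define $g_{ij}\colon V\to\mathbb R$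 by $g_{ij}(v)=g(v)$ if $v\in V_i$, $g_{ij}(v)=-g(v)$ if $v\in V_j$, and $g_{ij}(v)=0$ otherwise. *)

theory Defs
  imports "HOL-Analysis.Analysis"
begin

text \<open>Oriented hypergraph on the finite vertex type 'n (V = UNIV, N = CARD('n)).
  E is the edge set, phi the incidence function. Functions V -> real are vectors real^'n.\<close>

definition deg :: "'n set set \<Rightarrow> 'n \<Rightarrow> nat" where
  "deg E v = card {e \<in> E. v \<in> e}"

definition oriented_hypergraph :: "('n::finite) set set \<Rightarrow> ('n \<Rightarrow> 'n set \<Rightarrow> int) \<Rightarrow> bool" where
  "oriented_hypergraph E phi \<longleftrightarrow>
     (\<forall>e\<in>E. \<forall>v. phi v e \<in> {-1, 0, 1} \<and> (phi v e \<noteq> 0 \<longleftrightarrow> v \<in> e)) \<and>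
     (\<forall>v. deg E v \<ge> 1)"

definition adj :: "'n set set \<Rightarrow> ('n \<Rightarrow> 'n set \<Rightarrow> int) \<Rightarrow> 'n \<Rightarrow> 'n \<Rightarrow> real" where
  "adj E phi v w =
     (if v = w then 0
      else real (card {e \<in> E. v \<in> e \<and> w \<in> e \<and> phi v e = - phi w e})
         - real (card {e \<in> E. v \<in> e \<and> w \<in> e \<and> phi v e = phi w e}))"

definition lap :: "('n::finite) set set \<Rightarrow> ('n \<Rightarrow> 'n set \<Rightarrow> int) \<Rightarrow> real^'n \<Rightarrow> real^'n" where
  "lap E phi f = (\<chi> v. f $ v - (\<Sum>w\<in>UNIV. adj E phi v w * f $ w) / real (deg E v))"

definition wip :: "('n::finite) set set \<Rightarrow> real^'n \<Rightarrow> real^'n \<Rightarrow> real" where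
  "wip E f g = (\<Sum>v\<in>UNIV. real (deg E v) * f $ v * g $ v)"

definition RQ :: "('n::finite) set set \<Rightarrow> ('n \<Rightarrow> 'n set \<Rightarrow> int) \<Rightarrow> real^'n \<Rightarrow> real" where
  "RQ E phi f = wip E (lap E phi f) f / wip E f f"

definition is_eigenfunction :: "('n::finite) set set \<Rightarrow> ('n \<Rightarrow> 'n set \<Rightarrow> int) \<Rightarrow> real \<Rightarrow> real^'n \<Rightarrow> bool" where
  "is_eigenfunction E phi lam f \<longleftrightarrow> f \<noteq> 0 \<and> lap E phi f = lam *\<^sub>R f"

definition eigenvalues :: "('n::finite) set set \<Rightarrow> ('n \<Rightarrow> 'n set \<Rightarrow> int) \<Rightarrow> real set" where
  "eigenvalues E phi = {lam. \<exists>f. is_eigenfunction E phi lam f}"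

definition lam_min :: "('n::finite) set set \<Rightarrow> ('n \<Rightarrow> 'n set \<Rightarrow> int) \<Rightarrow> real" where
  "lam_min E phi = Min (eigenvalues E phi)"

definition lam_max :: "('n::finite) set set \<Rightarrow> ('n \<Rightarrow> 'n set \<Rightarrow> int) \<Rightarrow> real" where
  "lam_max E phi = Max (eigenvalues E phi)"

text \<open>Multiplicity: dimension of the eigenspace (L is self-adjoint, hence diagonalizable,
  so this equals the algebraic multiplicity).\<close>
definition mult :: "('n::finite) set set \<Rightarrow> ('n \<Rightarrow> 'n set \<Rightarrow> int) \<Rightarrow> real \<Rightarrow> nat" where
  "mult E phi lam = dim {f. lap E phi f = lam *\<^sub>R f}"

definition proper_strong_coloring :: "'n set set \<Rightarrow> nat \<Rightarrow> ('n \<Rightarrow> nat) \<Rightarrow> bool" where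
  "proper_strong_coloring E k c \<longleftrightarrow>
     (\<forall>v. c v \<in> {1..k}) \<and> (\<forall>e\<in>E. \<forall>v\<in>e. \<forall>w\<in>e. v \<noteq> w \<longrightarrow> c v \<noteq> c w)"

definition chrom :: "'n set set \<Rightarrow> nat" where
  "chrom E = (LEAST k. \<exists>c. proper_strong_coloring E k c)"

definition Sg :: "('n::finite) set set \<Rightarrow> ('n \<Rightarrow> 'n set \<Rightarrow> int) \<Rightarrow> real^'n \<Rightarrow> ('n \<Rightarrow> nat) \<Rightarrow> nat \<Rightarrow> nat \<Rightarrow> real" where
  "Sg E phi g c i j = (\<Sum>v\<in>{v. c v = i}. \<Sum>w\<in>{w. c w = j}. adj E phi v w * g $ v * g $ w)"

definition gij :: "real^'n \<Rightarrow> ('n \<Rightarrow> nat) \<Rightarrow> nat \<Rightarrow> nat \<Rightarrow> real^'n" where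
  "gij g c i j = (\<chi> v. if c v = i then g $ v else if c v = j then - g $ v else 0)"

end

theory Submission
  imports Defs
begin

definition Tb :: "('n::finite) set set \<Rightarrow> ('n \<Rightarrow> 'n set \<Rightarrow> int) \<Rightarrow> real^'n \<Rightarrow> real^'n \<Rightarrow> real" where
  "Tb E phi f h = (\<Sum>v\<in>UNIV. \<Sum>w\<in>UNIV. adj E phi v w * f $ v * h $ w)"

lemma deg_pos: "oriented_hypergraph E phi \<Longrightarrow> real (deg E v) > 0"
  unfolding oriented_hypergraph_def by (metis of_nat_0_less_iff less_le_trans zero_less_one)

lemma adj_sym: "adj E phi v w = adj E phi w v"
proof -
  have 1: "{e \<in> E. v \<in> e \<and> w \<in> e \<and> phi v e = - phi w e} = {e \<in> E. w \<in> e \<and> v \<in> e \<and> phi w e = - phi v e}"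
    by auto
  have 2: "{e \<in> E. v \<in> e \<and> w \<in> e \<and> phi v e = phi w e} = {e \<in> E. w \<in> e \<and> v \<in> e \<and> phi w e = phi v e}"
    by auto
  show ?thesis unfolding adj_def 1 2 by simp
qed

lemma adj_edge: "adj E phi v w \<noteq> 0 \<Longrightarrow> v \<noteq> w \<and> (\<exists>e\<in>E. v \<in> e \<and> w \<in> e)"
proof -
  assume a: "adj E phi v w \<noteq> 0"
  have "v \<noteq> w"
  proof
    assume "v = w" then show False using a by (simp add: adj_def)
  qed
  moreover have "\<exists>e\<in>E. v \<in> e \<and> w \<in> e"
  proof (rule ccontr)
    assume "\<not> ?thesis"
    hence e1: "{e \<in> E. v \<in> e \<and> w \<in> e \<and> phi v e = - phi w e} = {}"
      and e2: "{e \<in> E. v \<in> e \<and> w \<in> e \<and> phi v e = phi w e} = {}" by auto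
    have "adj E phi v w = 0" unfolding adj_def e1 e2 by simp
    thus False using a by simp
  qed
  ultimately show ?thesis by blast
qed

lemma Tb_sym: "Tb E phi f h = Tb E phi h f"
  unfolding Tb_def
  apply (subst sum.swap)
  apply (intro sum.cong refl)
  apply (metis adj_sym mult.commute mult.left_commute)
  done

lemma wip_sym: "wip E f h = wip E h f"
  unfolding wip_def by (simp add: mult.commute mult.left_commute)

lemma wip_lap:
  assumes hyp: "oriented_hypergraph E phi"
  shows "wip E (lap E phi f) h = wip E f h - Tb E phi h f"
proof -
  have "wip E (lap E phi f) h = (\<Sum>v\<in>UNIV. real (deg E v) * f $ v * h $ v - (\<Sum>w\<in>UNIV. adj E phi v w * f $ w) * h $ v)"
    unfolding wip_def lap_def
    apply (rule sum.cong, simp)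
    using deg_pos[OF hyp] by (simp add: field_simps)
  also have "\<dots> = wip E f h - Tb E phi h f"
    unfolding wip_def Tb_def by (simp add: sum_subtractf sum_distrib_right sum_distrib_left mult_ac)
  finally show ?thesis .
qed

lemma lap_lin: "lap E phi (a *\<^sub>R x + b *\<^sub>R y) = a *\<^sub>R lap E phi x + b *\<^sub>R lap E phi y"
  unfolding lap_def
  by (simp add: vec_eq_iff algebra_simps sum.distrib sum_distrib_left add_divide_distrib diff_divide_distrib)

lemma lap_zero: "lap E phi 0 = 0"
  using lap_lin[of E phi 0 0 0 0] by simp

lemma wip_lin: "wip E (a *\<^sub>R x + b *\<^sub>R y) h = a * wip E x h + b * wip E y h"
  unfolding wip_def by (simp add: algebra_simps sum.distrib sum_distrib_left)

lemma Tb_lin: "Tb E phi (a *\<^sub>R x + b *\<^sub>R y) h = a * Tb E phi x h + b * Tb E phi y h"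
  unfolding Tb_def by (simp add: algebra_simps sum.distrib sum_distrib_left)

lemma wip_nonneg: "oriented_hypergraph E phi \<Longrightarrow> wip E f f \<ge> 0"
  unfolding wip_def using deg_pos[of E phi]
  by (intro sum_nonneg) (simp add: mult.assoc less_imp_le)

lemma wip_zero_iff: assumes "oriented_hypergraph E phi" shows "wip E f f = 0 \<longleftrightarrow> f = 0"
proof
  assume a: "wip E f f = 0"
  have nn: "\<forall>v\<in>UNIV. real (deg E v) * f $ v * f $ v \<ge> 0" using deg_pos[OF assms]
    by (simp add: mult.assoc less_imp_le)
  have z: "\<forall>v\<in>UNIV. real (deg E v) * f $ v * f $ v = 0"
    using a nn unfolding wip_def by (subst sum_nonneg_eq_0_iff[symmetric]) auto
  have "f $ v = 0" for v
  proof -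
    have "real (deg E v) * (f $ v * f $ v) = 0" using z by (simp add: mult.assoc)
    thus ?thesis using deg_pos[OF assms, of v] by simp
  qed
  thus "f = 0" by (simp add: vec_eq_iff)
qed (simp add: wip_def)


lemma wip_scale: "wip E (a *\<^sub>R x) (a *\<^sub>R x) = a^2 * wip E x x"
  unfolding wip_def by (simp add: sum_distrib_left power2_eq_square mult_ac)

lemma Tb_scale: "Tb E phi (a *\<^sub>R x) (a *\<^sub>R x) = a^2 * Tb E phi x x"
  unfolding Tb_def by (simp add: sum_distrib_left power2_eq_square mult_ac)

lemma wip_scale_left: "wip E (a *\<^sub>R x) y = a * wip E x y"
  unfolding wip_def by (simp add: sum_distrib_left mult_ac)

lemma wip_zero_left: "wip E 0 y = 0"
  unfolding wip_def by simp

lemma psd_zero: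
  assumes hyp: "oriented_hypergraph E phi"
    and psd: "\<And>h. mu * wip E h h \<le> wip E (lap E phi h) h"
    and eq: "wip E (lap E phi f) f = mu * wip E f f"
  shows "lap E phi f = mu *\<^sub>R f"
proof -
  define B where "B x y = wip E x y - Tb E phi x y - mu * wip E x y" for x y
  have Blin: "B (a *\<^sub>R x + b *\<^sub>R y) z = a * B x z + b * B y z" for a b x y z
    unfolding B_def wip_lin Tb_lin by (simp add: algebra_simps)
  have Bsym: "B x y = B y x" for x y
    unfolding B_def using wip_sym Tb_sym by metis
  have Bq: "B x x = wip E (lap E phi x) x - mu * wip E x x" for x
    unfolding B_def wip_lap[OF hyp] by simp
  have Bnn: "B x x \<ge> 0" for x using psd[of x] Bq[of x] by simp
  have Bff: "B f f = 0" using Bq[of f] eq by simp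
  define r where "r = lap E phi f - mu *\<^sub>R f"
  have r1: "1 *\<^sub>R lap E phi f + (- mu) *\<^sub>R f = r" by (simp add: r_def)
  have "wip E (1 *\<^sub>R lap E phi f + (- mu) *\<^sub>R f) r = wip E (lap E phi f) r - mu * wip E f r"
    using wip_lin[of E 1 "lap E phi f" "-mu" f r] by simp
  hence "wip E r r = wip E (lap E phi f) r - mu * wip E f r" by (simp only: r1)
  also have "\<dots> = B f r" unfolding B_def wip_lap[OF hyp] using Tb_sym by metis
  finally have Bfr: "B f r = wip E r r" by simp
  define w where "w = wip E r r"
  define qr where "qr = B r r"
  have w0: "w \<ge> 0" unfolding w_def by (rule wip_nonneg[OF hyp])
  have q0: "qr \<ge> 0" unfolding qr_def by (rule Bnn)
  have expand: "B (1 *\<^sub>R f + (-t) *\<^sub>R r) (1 *\<^sub>R f + (-t) *\<^sub>R r) = - 2 * t * w + t^2 * qr" for t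
  proof -
    define x where "x = 1 *\<^sub>R f + (-t) *\<^sub>R r"
    have e0: "B x x = B f x - t * B r x" using Blin[of 1 f "-t" r x] unfolding x_def[symmetric] by simp
    have a1: "B f x = B f f - t * B r f"
      using Blin[of 1 f "-t" r f] Bsym[of f x] unfolding x_def[symmetric] by simp
    have a2: "B r x = B f r - t * B r r"
      using Blin[of 1 f "-t" r r] Bsym[of r x] unfolding x_def[symmetric] by simp
    show ?thesis unfolding x_def[symmetric] w_def[symmetric] qr_def[symmetric]
      using e0 a1 a2 Bff Bfr Bsym[of r f] unfolding w_def[symmetric] qr_def[symmetric]
      by (simp add: power2_eq_square algebra_simps)
  qed
  have w00: "w = 0"
  proof (rule ccontr)
    assume "w \<noteq> 0"
    hence wp: "w > 0" using w0 by simp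
    define t where "t = w / (qr + 1)"
    have tp: "t > 0" unfolding t_def using wp q0 by simp
    have "t * qr \<le> w" unfolding t_def using wp q0 by (simp add: field_simps)
    hence "t * (t * qr) \<le> t * w" using tp by (simp add: mult_left_mono)
    moreover have "0 \<le> - 2 * t * w + t^2 * qr" using expand[of t] Bnn by metis
    moreover have "t * w > 0" using tp wp by simp
    ultimately show False by (simp add: power2_eq_square algebra_simps)
  qed
  hence "r = 0" using wip_zero_iff[OF hyp] unfolding w_def by simp
  thus ?thesis unfolding r_def by simp
qed

lemma var_exists:
  fixes E :: "('n::finite) set set"
  assumes hyp: "oriented_hypergraph E phi"
  shows "\<exists>mu f. (\<forall>h. mu * wip E h h \<le> wip E (lap E phi h) h) \<and> is_eigenfunction E phi mu f"
proof -
  define K where "K = {x::real^'n. wip E x x = 1}"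
  have cont1: "continuous_on UNIV (\<lambda>x::real^'n. wip E x x)"
    unfolding wip_def by (intro continuous_intros)
  have cont2: "continuous_on UNIV (\<lambda>x::real^'n. wip E (lap E phi x) x)"
  proof -
    have "(\<lambda>x::real^'n. wip E (lap E phi x) x) = (\<lambda>x. wip E x x - Tb E phi x x)"
      by (simp add: wip_lap[OF hyp])
    moreover have "continuous_on UNIV (\<lambda>x::real^'n. wip E x x - Tb E phi x x)"
      unfolding wip_def Tb_def by (intro continuous_intros)
    ultimately show ?thesis by metis
  qed
  have clo: "closed K" unfolding K_def by (intro closed_Collect_eq cont1 continuous_on_const)
  have degge: "real (deg E v) \<ge> 1" for v using hyp unfolding oriented_hypergraph_def by simp
  have bnd: "bounded K"
  proof -
    have "norm x \<le> real CARD('n)" if "x \<in> K" for x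
    proof -
      have "\<bar>x $ v\<bar> \<le> 1" for v
      proof -
        have "real (deg E v) * x $ v * x $ v \<le> wip E x x"
          unfolding wip_def using deg_pos[OF hyp]
          by (intro member_le_sum) (auto simp: mult.assoc less_imp_le)
        moreover have "x $ v * x $ v \<le> real (deg E v) * x $ v * x $ v"
          using degge[of v] mult_right_mono[of 1 "real (deg E v)" "x $ v * x $ v"]
          by (simp add: mult.assoc)
        ultimately have "(x $ v)^2 \<le> 1" using that unfolding K_def by (simp add: power2_eq_square)
        thus ?thesis by (simp add: abs_square_le_1)
      qed
      hence "(\<Sum>v\<in>UNIV. \<bar>x $ v\<bar>) \<le> (\<Sum>v\<in>(UNIV::'n set). 1)" by (intro sum_mono) auto
      thus ?thesis using norm_le_l1_cart[of x] by simp
    qed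
    thus ?thesis unfolding bounded_iff by blast
  qed
  have comp: "compact K" using clo bnd compact_eq_bounded_closed by blast
  define one :: "real^'n" where "one = (\<chi> v. 1)"
  have "one \<noteq> 0" unfolding one_def by (simp add: vec_eq_iff)
  hence Wp: "wip E one one > 0" using wip_nonneg[OF hyp, of one] wip_zero_iff[OF hyp, of one] by simp
  define x0 where "x0 = (1 / sqrt (wip E one one)) *\<^sub>R one"
  have "wip E x0 x0 = 1" unfolding x0_def wip_scale using Wp by (simp add: power_divide)
  hence ne: "K \<noteq> {}" unfolding K_def by blast
  obtain f0 where f0K: "f0 \<in> K" and f0min: "\<And>y. y \<in> K \<Longrightarrow> wip E (lap E phi f0) f0 \<le> wip E (lap E phi y) y"
    using continuous_attains_inf[OF comp ne continuous_on_subset[OF cont2]] by blast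
  define mu where "mu = wip E (lap E phi f0) f0"
  have qexp: "wip E (lap E phi x) x = wip E x x - Tb E phi x x" for x
    by (simp add: wip_lap[OF hyp])
  have psd: "mu * wip E h h \<le> wip E (lap E phi h) h" for h
  proof (cases "h = 0")
    case True thus ?thesis by (simp add: lap_zero wip_zero_left)
  next
    case False
    define s where "s = sqrt (wip E h h)"
    have hp: "wip E h h > 0" using False wip_nonneg[OF hyp, of h] wip_zero_iff[OF hyp, of h] by simp
    hence sp: "s > 0" and s2: "s^2 = wip E h h" unfolding s_def by auto
    define h' where "h' = (1/s) *\<^sub>R h"
    have "wip E h' h' = 1" unfolding h'_def wip_scale using sp s2 hp by (simp add: power_divide)
    hence "mu \<le> wip E (lap E phi h') h'" unfolding mu_def using f0min K_def by blast
    also have "wip E (lap E phi h') h' = (1/s)^2 * wip E (lap E phi h) h"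
      unfolding qexp h'_def wip_scale Tb_scale by (simp add: algebra_simps)
    finally have "mu * s^2 \<le> wip E (lap E phi h) h" using sp by (simp add: power_divide field_simps)
    thus ?thesis using s2 by simp
  qed
  have "lap E phi f0 = mu *\<^sub>R f0"
    using psd_zero[OF hyp psd] f0K unfolding K_def mu_def by simp
  moreover have "f0 \<noteq> 0" using f0K unfolding K_def by (auto simp: wip_zero_left)
  ultimately have "is_eigenfunction E phi mu f0" unfolding is_eigenfunction_def by simp
  thus ?thesis using psd by blast
qed


lemma eig_orth:
  assumes hyp: "oriented_hypergraph E phi"
    and f: "lap E phi f = a *\<^sub>R f" and h: "lap E phi h = b *\<^sub>R h" and ab: "a \<noteq> b"
  shows "wip E f h = 0"
proof -
  have "a * wip E f h = wip E f h - Tb E phi h f"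
    using wip_lap[OF hyp, of f h] f by (simp add: wip_scale_left)
  moreover have "b * wip E h f = wip E h f - Tb E phi f h"
    using wip_lap[OF hyp, of h f] h by (simp add: wip_scale_left)
  ultimately have "a * wip E f h = b * wip E f h" using wip_sym[of E f h] Tb_sym[of E phi f h] by simp
  thus ?thesis using ab by simp
qed

lemma finite_eig:
  fixes E :: "('n::finite) set set"
  assumes hyp: "oriented_hypergraph E phi"
  shows "finite (eigenvalues E phi)"
proof -
  define ef where "ef lam = (SOME f. is_eigenfunction E phi lam f)" for lam
  have efp: "is_eigenfunction E phi lam (ef lam)" if "lam \<in> eigenvalues E phi" for lam
    using that unfolding eigenvalues_def ef_def by (auto intro: someI_ex)
  define Sc :: "real^'n \<Rightarrow> real^'n" where "Sc f = (\<chi> v. sqrt (real (deg E v)) * f $ v)" for f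
  have sq: "sqrt (real n) * x * (sqrt (real n) * y) = real n * x * y" for n x y
  proof -
    have "sqrt (real n) * sqrt (real n) = real n" by simp
    thus ?thesis by (metis mult.commute mult.left_commute)
  qed
  have Sc_inner: "Sc f \<bullet> Sc h = wip E f h" for f h
    unfolding inner_vec_def Sc_def wip_def by (simp add: sq)
  define G where "G = Sc \<circ> ef"
  have Gpos: "G a \<bullet> G a > 0" if "a \<in> eigenvalues E phi" for a
    using efp[OF that] wip_nonneg[OF hyp, of "ef a"] wip_zero_iff[OF hyp, of "ef a"]
    unfolding G_def is_eigenfunction_def by (simp add: Sc_inner)
  have Gorth: "G a \<bullet> G b = 0" if "a \<in> eigenvalues E phi" "b \<in> eigenvalues E phi" "a \<noteq> b" for a b
    using efp[OF that(1)] efp[OF that(2)] that(3) eig_orth[OF hyp]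
    unfolding G_def is_eigenfunction_def by (simp add: Sc_inner)
  have inj: "inj_on G (eigenvalues E phi)"
  proof (rule inj_onI, rule ccontr)
    fix a b assume "a \<in> eigenvalues E phi" "b \<in> eigenvalues E phi" "G a = G b" "a \<noteq> b"
    thus False using Gpos Gorth by fastforce
  qed
  have "pairwise orthogonal (G ` eigenvalues E phi)"
    unfolding pairwise_def orthogonal_def using Gorth by fastforce
  moreover have "0 \<notin> G ` eigenvalues E phi" using Gpos by fastforce
  ultimately have "independent (G ` eigenvalues E phi)" by (rule pairwise_orthogonal_independent)
  hence "finite (G ` eigenvalues E phi)" using independent_bound by blast
  thus ?thesis using finite_imageD inj by blast
qed

lemma lam_min_props:
  fixes E :: "('n::finite) set set"
  assumes hyp: "oriented_hypergraph E phi"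
  shows "lam_min E phi \<in> eigenvalues E phi"
    and "\<And>h. lam_min E phi * wip E h h \<le> wip E (lap E phi h) h"
    and "\<And>lam. lam \<in> eigenvalues E phi \<Longrightarrow> lam_min E phi \<le> lam"
proof -
  obtain mu f where psd: "\<And>h. mu * wip E h h \<le> wip E (lap E phi h) h"
    and ef: "is_eigenfunction E phi mu f" using var_exists[OF hyp] by blast
  have mem: "mu \<in> eigenvalues E phi" using ef unfolding eigenvalues_def by blast
  have le: "mu \<le> lam" if lm: "lam \<in> eigenvalues E phi" for lam
  proof -
    obtain h where h: "is_eigenfunction E phi lam h" using lm unfolding eigenvalues_def by blast
    have "mu * wip E h h \<le> lam * wip E h h"
      using psd[of h] h unfolding is_eigenfunction_def by (simp add: wip_scale_left)
    moreover have "wip E h h > 0" using h wip_nonneg[OF hyp, of h] wip_zero_iff[OF hyp, of h]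
      unfolding is_eigenfunction_def by simp
    ultimately show ?thesis by simp
  qed
  have eq: "lam_min E phi = mu" unfolding lam_min_def
    by (rule Min_eqI[OF finite_eig[OF hyp]]) (use le mem in auto)
  show "lam_min E phi \<in> eigenvalues E phi" using eq mem by simp
  show "\<And>h. lam_min E phi * wip E h h \<le> wip E (lap E phi h) h" using eq psd by simp
  show "\<And>lam. lam \<in> eigenvalues E phi \<Longrightarrow> lam_min E phi \<le> lam" using eq le by simp
qed

definition rst :: "real^'n \<Rightarrow> ('n \<Rightarrow> nat) \<Rightarrow> nat \<Rightarrow> real^'n" where
  "rst g c i = (\<chi> v. if c v = i then g $ v else 0)"

definition nrm :: "('n::finite) set set \<Rightarrow> real^'n \<Rightarrow> ('n \<Rightarrow> nat) \<Rightarrow> nat \<Rightarrow> real" where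
  "nrm E g c i = wip E (rst g c i) (rst g c i)"

lemma adj_same_color:
  assumes col: "proper_strong_coloring E k c" and cc: "c v = c w"
  shows "adj E phi v w = 0"
proof (rule ccontr)
  assume "adj E phi v w \<noteq> 0"
  hence ae: "v \<noteq> w \<and> (\<exists>e\<in>E. v \<in> e \<and> w \<in> e)" by (rule adj_edge)
  then obtain e where e: "e \<in> E" and ve: "v \<in> e" and we: "w \<in> e" by blast
  have vw: "v \<noteq> w" using ae by simp
  have "\<forall>e\<in>E. \<forall>v\<in>e. \<forall>w\<in>e. v \<noteq> w \<longrightarrow> c v \<noteq> c w"
    using col unfolding proper_strong_coloring_def by (rule conjunct2)
  hence "c v \<noteq> c w" using e ve we vw by simp
  thus False using cc by simp
qed

lemma sum_if_filter: "(\<Sum>v\<in>(UNIV::'n::finite set). if P v then F v else 0) = (\<Sum>v\<in>{v. P v}. F v)"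
  by (simp add: sum.inter_filter[symmetric])

lemma Sg_eq: "Sg E phi g c i j = Tb E phi (rst g c i) (rst g c j)"
proof -
  have "Tb E phi (rst g c i) (rst g c j) =
     (\<Sum>v\<in>UNIV. if c v = i then (\<Sum>w\<in>UNIV. if c w = j then adj E phi v w * g $ v * g $ w else 0) else 0)"
    unfolding Tb_def rst_def by (intro sum.cong refl) (auto intro!: sum.cong)
  also have "\<dots> = Sg E phi g c i j" unfolding Sg_def sum_if_filter ..
  finally show ?thesis by simp
qed

lemma Sg_sym: "Sg E phi g c i j = Sg E phi g c j i"
  unfolding Sg_eq using Tb_sym by metis

lemma Sg_diag: "proper_strong_coloring E k c \<Longrightarrow> Sg E phi g c i i = 0"
  unfolding Sg_def by (intro sum.neutral ballI) (simp add: adj_same_color)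

lemma gij_rst: "i \<noteq> j \<Longrightarrow> gij g c i j = 1 *\<^sub>R rst g c i + (-1) *\<^sub>R rst g c j"
  unfolding gij_def rst_def by (simp add: vec_eq_iff)

lemma Tb_lin2: "Tb E phi z (a *\<^sub>R x + b *\<^sub>R y) = a * Tb E phi z x + b * Tb E phi z y"
  using Tb_lin[of E phi a x b y z] Tb_sym by metis

lemma Tb_gij:
  assumes col: "proper_strong_coloring E k c" and ij: "i \<noteq> j"
  shows "Tb E phi (gij g c i j) (gij g c i j) = - 2 * Sg E phi g c i j"
proof -
  let ?x = "rst g c i" and ?y = "rst g c j"
  have "Tb E phi (gij g c i j) (gij g c i j) = Tb E phi (1 *\<^sub>R ?x + (-1) *\<^sub>R ?y) (1 *\<^sub>R ?x + (-1) *\<^sub>R ?y)"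
    by (simp only: gij_rst[OF ij])
  also have "\<dots> = Tb E phi ?x ?x - Tb E phi ?x ?y - Tb E phi ?y ?x + Tb E phi ?y ?y"
    unfolding Tb_lin Tb_lin2 by simp
  finally show ?thesis
    unfolding Sg_eq[symmetric] using Sg_diag[OF col] Sg_sym[of E phi g c j i] by simp
qed

lemma wip_gij:
  assumes ij: "i \<noteq> j"
  shows "wip E (gij g c i j) (gij g c i j) = nrm E g c i + nrm E g c j"
  unfolding nrm_def wip_def sum.distrib[symmetric]
  by (intro sum.cong refl) (use ij in \<open>auto simp: gij_def rst_def\<close>)

lemma nrm_eq: "nrm E g c i = (\<Sum>v\<in>{v. c v = i}. real (deg E v) * g $ v * g $ v)"
  unfolding nrm_def wip_def sum_if_filter[symmetric] by (intro sum.cong refl) (simp add: rst_def)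

lemma wip_group:
  assumes col: "proper_strong_coloring E k c"
  shows "wip E g g = (\<Sum>i\<in>{1..k}. nrm E g c i)"
proof -
  have "wip E g g = (\<Sum>i\<in>{1..k}. \<Sum>v\<in>{x\<in>UNIV. c x = i}. real (deg E v) * g $ v * g $ v)"
    unfolding wip_def using col unfolding proper_strong_coloring_def
    by (intro sum.group[symmetric]) auto
  thus ?thesis unfolding nrm_eq by simp
qed

lemma Tb_group:
  assumes col: "proper_strong_coloring E k c"
  shows "Tb E phi g g = (\<Sum>i\<in>{1..k}. \<Sum>j\<in>{1..k}. Sg E phi g c i j)"
proof -
  have cr: "c ` UNIV \<subseteq> {1..k}" using col unfolding proper_strong_coloring_def by auto
  have gr: "(\<Sum>v\<in>UNIV. F v) = (\<Sum>i\<in>{1..k}. \<Sum>v\<in>{x. c x = i}. F v)" for F :: "'a \<Rightarrow> real"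
  proof -
    have "(\<Sum>v\<in>UNIV. F v) = (\<Sum>i\<in>{1..k}. \<Sum>v\<in>{x\<in>UNIV. c x = i}. F v)"
      using cr by (intro sum.group[symmetric]) auto
    thus ?thesis by simp
  qed
  have "Tb E phi g g = (\<Sum>i\<in>{1..k}. \<Sum>v\<in>{x. c x = i}. \<Sum>w\<in>UNIV. adj E phi v w * g $ v * g $ w)"
    unfolding Tb_def by (rule gr)
  also have "\<dots> = (\<Sum>i\<in>{1..k}. \<Sum>v\<in>{x. c x = i}. \<Sum>j\<in>{1..k}. \<Sum>w\<in>{x. c x = j}. adj E phi v w * g $ v * g $ w)"
    by (subst gr) (rule refl)
  also have "\<dots> = (\<Sum>i\<in>{1..k}. \<Sum>j\<in>{1..k}. \<Sum>v\<in>{x. c x = i}. \<Sum>w\<in>{x. c x = j}. adj E phi v w * g $ v * g $ w)"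
    by (intro sum.cong refl sum.swap)
  also have "\<dots> = (\<Sum>i\<in>{1..k}. \<Sum>j\<in>{1..k}. Sg E phi g c i j)"
    unfolding Sg_def by (rule refl)
  finally show ?thesis .
qed

lemma quad_gij:
  assumes hyp: "oriented_hypergraph E phi" and col: "proper_strong_coloring E k c" and ij: "i \<noteq> j"
  shows "wip E (lap E phi (gij f c i j)) (gij f c i j) = nrm E f c i + nrm E f c j + 2 * Sg E phi f c i j"
  unfolding wip_lap[OF hyp] wip_gij[OF ij] Tb_gij[OF col ij] by simp

lemma Tb_zero_left: "Tb E phi 0 y = 0"
  unfolding Tb_def by simp

lemma core:
  fixes E :: "('n::finite) set set"
  assumes hyp: "oriented_hypergraph E phi"
    and col: "proper_strong_coloring E k c"
    and fe: "lap E phi f = mu *\<^sub>R f"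
    and ke: "real k * (1 - lam_min E phi) = mu - lam_min E phi"
  shows "\<forall>i\<in>{1..k}. \<forall>j\<in>{1..k}. i \<noteq> j \<longrightarrow>
           (1 - lam_min E phi) * (nrm E f c i + nrm E f c j) + 2 * Sg E phi f c i j = 0"
proof -
  let ?l = "lam_min E phi"
  let ?I = "{1..k}"
  define a where "a i j = (1 - ?l) * (nrm E f c i + nrm E f c j) + 2 * Sg E phi f c i j" for i j
  have a_nn: "a i j \<ge> 0" if "i \<noteq> j" for i j
  proof -
    have "a i j = wip E (lap E phi (gij f c i j)) (gij f c i j) - ?l * wip E (gij f c i j) (gij f c i j)"
      unfolding a_def quad_gij[OF hyp col that] wip_gij[OF that] by (simp add: algebra_simps)
    thus ?thesis using lam_min_props(2)[OF hyp, of "gij f c i j"] by simp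
  qed
  define N where "N = wip E f f"
  have N_eq: "N = (\<Sum>i\<in>?I. nrm E f c i)" unfolding N_def by (rule wip_group[OF col])
  have "wip E (lap E phi f) f = mu * N" unfolding fe N_def by (simp add: wip_scale_left)
  hence Tb_eq: "Tb E phi f f = (1 - mu) * N" unfolding wip_lap[OF hyp] N_def by (simp add: algebra_simps)
  have Tb_sum: "Tb E phi f f = (\<Sum>i\<in>?I. \<Sum>j\<in>?I-{i}. Sg E phi f c i j)"
    unfolding Tb_group[OF col]
  proof (rule sum.cong[OF refl])
    fix i assume "i \<in> ?I"
    hence "(\<Sum>j\<in>?I. Sg E phi f c i j) = Sg E phi f c i i + (\<Sum>j\<in>?I-{i}. Sg E phi f c i j)"
      by (intro sum.remove) auto
    thus "(\<Sum>j\<in>?I. Sg E phi f c i j) = (\<Sum>j\<in>?I-{i}. Sg E phi f c i j)"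
      using Sg_diag[OF col] by simp
  qed
  have n_sum: "(\<Sum>i\<in>?I. \<Sum>j\<in>?I-{i}. nrm E f c i + nrm E f c j) = 2 * (real k - 1) * N"
  proof -
    have "(\<Sum>j\<in>?I-{i}. nrm E f c i + nrm E f c j) = (real k - 1) * nrm E f c i + (N - nrm E f c i)"
      if i: "i \<in> ?I" for i
    proof -
      have ck: "card (?I - {i}) = k - 1" using i by simp
      have k1: "k \<ge> 1" using i by simp
      have "(\<Sum>j\<in>?I-{i}. nrm E f c i) = (real k - 1) * nrm E f c i"
        using ck k1 by (simp add: of_nat_diff)
      moreover have "(\<Sum>j\<in>?I-{i}. nrm E f c j) = N - nrm E f c i"
        unfolding N_eq using i by (simp add: sum_diff1)
      ultimately show ?thesis by (simp add: sum.distrib)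
    qed
    hence "(\<Sum>i\<in>?I. \<Sum>j\<in>?I-{i}. nrm E f c i + nrm E f c j)
        = (\<Sum>i\<in>?I. (real k - 1) * nrm E f c i + (N - nrm E f c i))" by (rule sum.cong[OF refl]) auto
    also have "\<dots> = (real k - 1) * N + (real k * N - N)"
      unfolding N_eq by (simp add: sum.distrib sum_subtractf sum_distrib_left)
    finally show ?thesis by (simp add: algebra_simps)
  qed
  have total: "(\<Sum>i\<in>?I. \<Sum>j\<in>?I-{i}. a i j) = 0"
  proof -
    define X where "X i j = nrm E f c i + nrm E f c j" for i j
    have aX: "a i j = (1 - ?l) * X i j + 2 * Sg E phi f c i j" for i j by (simp add: a_def X_def)
    have "(\<Sum>i\<in>?I. \<Sum>j\<in>?I-{i}. a i j) = (\<Sum>i\<in>?I. \<Sum>j\<in>?I-{i}. (1 - ?l) * X i j + 2 * Sg E phi f c i j)"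
      by (simp only: aX)
    also have "\<dots> = (1 - ?l) * (\<Sum>i\<in>?I. \<Sum>j\<in>?I-{i}. X i j) + 2 * (\<Sum>i\<in>?I. \<Sum>j\<in>?I-{i}. Sg E phi f c i j)"
      by (simp only: sum.distrib sum_distrib_left)
    also have "\<dots> = 2 * N * ((real k - 1) * (1 - ?l) + 1 - mu)"
      unfolding X_def n_sum Tb_sum[symmetric] Tb_eq by (simp add: algebra_simps)
    also have "(real k - 1) * (1 - ?l) + 1 - mu = 0" using ke by (simp add: algebra_simps)
    finally show ?thesis by simp
  qed
  have inner_nn: "\<forall>i\<in>?I. 0 \<le> (\<Sum>j\<in>?I-{i}. a i j)"
  proof
    fix i show "0 \<le> (\<Sum>j\<in>?I-{i}. a i j)" by (rule sum_nonneg) (metis DiffD2 a_nn singletonI)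
  qed
  have "\<forall>i\<in>?I. (\<Sum>j\<in>?I-{i}. a i j) = 0"
  proof -
    have eq0: "(\<Sum>i\<in>?I. \<Sum>j\<in>?I-{i}. a i j) = 0 \<longleftrightarrow> (\<forall>i\<in>?I. (\<Sum>j\<in>?I-{i}. a i j) = 0)"
      by (rule sum_nonneg_eq_0_iff) (simp, erule inner_nn[rule_format])
    show ?thesis using iffD1[OF eq0 total] .
  qed
  have "\<forall>i\<in>?I. \<forall>j\<in>?I-{i}. a i j = 0"
  proof (intro ballI)
    fix i j assume i: "i \<in> ?I" and j: "j \<in> ?I-{i}"
    have nn: "\<And>x. x \<in> ?I-{i} \<Longrightarrow> 0 \<le> a i x" using a_nn by simp
    have s0: "(\<Sum>j\<in>?I-{i}. a i j) = 0" using \<open>\<forall>i\<in>?I. _ = 0\<close> i by (rule bspec)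
    have fin: "finite (?I-{i})" by simp
    have "\<forall>j\<in>?I-{i}. a i j = 0" using iffD1[OF sum_nonneg_eq_0_iff[OF fin nn] s0] .
    thus "a i j = 0" using j by (rule bspec)
  qed
  thus ?thesis unfolding a_def by auto
qed

lemma supp:
  fixes E :: "('n::finite) set set"
  assumes hyp: "oriented_hypergraph E phi"
    and col: "proper_strong_coloring E k c"
    and fe: "lap E phi f = mu *\<^sub>R f" and fnz: "f \<noteq> 0"
    and ke: "real k * (1 - lam_min E phi) = mu - lam_min E phi"
    and lt: "lam_min E phi < 1"
  shows "\<forall>i\<in>{1..k}. \<exists>v. c v = i \<and> f $ v \<noteq> 0"
proof (rule ballI, rule ccontr)
  fix i assume i: "i \<in> {1..k}" and no: "\<not> (\<exists>v. c v = i \<and> f $ v \<noteq> 0)"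
  have ri: "rst f c i = 0" using no by (simp add: rst_def vec_eq_iff)
  have ni: "nrm E f c i = 0" by (simp add: nrm_def ri wip_zero_left)
  have si: "Sg E phi f c i j = 0" for j by (simp add: Sg_eq ri Tb_zero_left)
  have "f $ v = 0" for v
  proof (cases "c v = i")
    case True thus ?thesis using no by simp
  next
    case False
    have cv: "c v \<in> {1..k}" using col unfolding proper_strong_coloring_def by simp
    have "(1 - lam_min E phi) * (nrm E f c i + nrm E f c (c v)) + 2 * Sg E phi f c i (c v) = 0"
      using core[OF hyp col fe ke] i cv False by simp
    hence "nrm E f c (c v) = 0" using ni si lt by simp
    hence "rst f c (c v) = 0" unfolding nrm_def using wip_zero_iff[OF hyp] by simp
    hence "(rst f c (c v)) $ v = 0" by simp
    thus ?thesis by (simp add: rst_def)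
  qed
  hence "f = 0" by (simp add: vec_eq_iff)
  thus False using fnz by simp
qed

lemma nrm_nonneg: "oriented_hypergraph E phi \<Longrightarrow> nrm E f c i \<ge> 0"
  unfolding nrm_def by (rule wip_nonneg)

lemma nrm_pos:
  assumes hyp: "oriented_hypergraph E phi" and v: "c v = i" "f $ v \<noteq> 0"
  shows "nrm E f c i > 0"
proof -
  have "rst f c i $ v \<noteq> 0" using v by (simp add: rst_def)
  hence "rst f c i \<noteq> 0" by auto
  thus ?thesis unfolding nrm_def using wip_nonneg[OF hyp, of "rst f c i"] wip_zero_iff[OF hyp, of "rst f c i"]
    by linarith
qed

lemma gij_eig:
  fixes E :: "('n::finite) set set"
  assumes hyp: "oriented_hypergraph E phi"
    and col: "proper_strong_coloring E k c"
    and fe: "lap E phi f = mu *\<^sub>R f" and fnz: "f \<noteq> 0"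
    and ke: "real k * (1 - lam_min E phi) = mu - lam_min E phi"
    and lt: "lam_min E phi < 1"
    and i: "i \<in> {1..k}" and j: "j \<in> {1..k}" and ij: "i \<noteq> j"
  shows "is_eigenfunction E phi (lam_min E phi) (gij f c i j)"
    and "wip E (gij f c i j) (gij f c i j) > 0"
    and "wip E (lap E phi (gij f c i j)) (gij f c i j) = lam_min E phi * wip E (gij f c i j) (gij f c i j)"
proof -
  have c0: "(1 - lam_min E phi) * (nrm E f c i + nrm E f c j) + 2 * Sg E phi f c i j = 0"
    using core[OF hyp col fe ke] i j ij by simp
  show eq: "wip E (lap E phi (gij f c i j)) (gij f c i j) = lam_min E phi * wip E (gij f c i j) (gij f c i j)"
    unfolding quad_gij[OF hyp col ij] wip_gij[OF ij] using c0 by (simp add: algebra_simps)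
  obtain v where v: "c v = i" "f $ v \<noteq> 0" using supp[OF hyp col fe fnz ke lt] i by blast
  show pos: "wip E (gij f c i j) (gij f c i j) > 0"
    unfolding wip_gij[OF ij] using nrm_pos[of E phi c v i f, OF hyp v] nrm_nonneg[OF hyp, of f c j] by simp
  have "lap E phi (gij f c i j) = lam_min E phi *\<^sub>R gij f c i j"
    by (rule psd_zero[OF hyp lam_min_props(2)[OF hyp] eq])
  moreover have "gij f c i j \<noteq> 0" using pos by (auto simp: wip_zero_left)
  ultimately show "is_eigenfunction E phi (lam_min E phi) (gij f c i j)"
    unfolding is_eigenfunction_def by simp
qed

lemma indep_family:
  fixes F :: "'i \<Rightarrow> 'a::real_vector"
  assumes fin: "finite I" and h: "\<And>a. (\<Sum>i\<in>I. a i *\<^sub>R F i) = 0 \<Longrightarrow> \<forall>i\<in>I. a i = 0"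
  shows "inj_on F I" and "independent (F ` I)"
proof -
  show inj: "inj_on F I"
  proof (rule inj_onI, rule ccontr)
    fix x y assume x: "x \<in> I" and y: "y \<in> I" and Fxy: "F x = F y" and xy: "x \<noteq> y"
    define a where "a t = (if t = x then 1 else if t = y then -1 else (0::real))" for t
    have pt: "a t *\<^sub>R F t = (if t = x then F t else 0) - (if t = y then F t else 0)" for t
      unfolding a_def using xy by auto
    have "(\<Sum>t\<in>I. a t *\<^sub>R F t) = F x - F y"
      unfolding pt sum_subtractf using fin x y by (simp add: sum.delta)
    hence "(\<Sum>t\<in>I. a t *\<^sub>R F t) = 0" using Fxy by simp
    hence "a x = 0" using h x by simp
    thus False unfolding a_def by simp
  qed
  show "independent (F ` I)"
  proof (rule independent_if_scalars_zero)
    show "finite (F ` I)" using fin by simp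
  next
    fix g x assume s: "(\<Sum>x\<in>F ` I. g x *\<^sub>R x) = 0" and x: "x \<in> F ` I"
    have "(\<Sum>i\<in>I. g (F i) *\<^sub>R F i) = 0" using s sum.reindex[OF inj, of "\<lambda>x. g x *\<^sub>R x"] by simp
    hence "\<forall>i\<in>I. g (F i) = 0" by (rule h)
    thus "g x = 0" using x by auto
  qed
qed

lemma card_le_mult:
  fixes F :: "'i \<Rightarrow> real^'n::finite"
  assumes fin: "finite I" and h: "\<And>a. (\<Sum>i\<in>I. a i *\<^sub>R F i) = 0 \<Longrightarrow> \<forall>i\<in>I. a i = 0"
    and ev: "\<And>i. i \<in> I \<Longrightarrow> lap E phi (F i) = lam *\<^sub>R F i"
  shows "card I \<le> mult E phi lam"
proof -
  have "card I = card (F ` I)" using indep_family(1)[of I F, OF fin h] by (simp add: card_image)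
  also have "\<dots> \<le> dim {f. lap E phi f = lam *\<^sub>R f}"
    by (rule independent_card_le_dim) (use ev indep_family(2)[of I F, OF fin h] in auto)
  finally show ?thesis unfolding mult_def .
qed

lemma sum_single:
  assumes "finite I" "m \<in> I" "\<And>j. j \<in> I \<Longrightarrow> j \<noteq> m \<Longrightarrow> b j = 0"
  shows "sum b I = b m"
proof -
  have "sum b I = b m + sum b (I - {m})" by (rule sum.remove[OF assms(1,2)])
  also have "sum b (I - {m}) = 0" using assms(3) by (intro sum.neutral) simp
  finally show ?thesis by simp
qed

lemma sum_two:
  assumes "finite I" "(1::nat) \<in> I" "2 \<in> I" "\<And>j. j \<in> I \<Longrightarrow> j \<noteq> 1 \<Longrightarrow> j \<noteq> 2 \<Longrightarrow> b j = 0"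
  shows "sum b I = b 1 + b 2"
proof -
  have "sum b I = sum b {1,2}"
    by (rule sum.mono_neutral_right) (use assms in auto)
  thus ?thesis by simp
qed

theorem mainTheorem2:
  fixes E :: "('n::finite) set set" and phi :: "'n \<Rightarrow> 'n set \<Rightarrow> int"
    and g :: "real^'n" and c :: "'n \<Rightarrow> nat"
  assumes hyp: "oriented_hypergraph E phi"
    and Anz: "\<exists>v w. adj E phi v w \<noteq> 0"
    and chi_eq: "real (chrom E) = (lam_max E phi - lam_min E phi) / (1 - lam_min E phi)"
    and g_eig: "is_eigenfunction E phi (lam_max E phi) g"
    and col: "proper_strong_coloring E (chrom E) c"
  shows "(\<forall>i\<in>{1..chrom E}. \<exists>v. c v = i \<and> g $ v \<noteq> 0)
    \<and> (\<forall>i j. 1 \<le> i \<and> i < j \<and> j \<le> chrom E \<longrightarrow> Sg E phi g c i j < 0)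
    \<and> (\<forall>i j. 1 \<le> i \<and> i < j \<and> j \<le> chrom E \<longrightarrow>
          RQ E phi (gij g c i j) = lam_min E phi
        \<and> lam_min E phi = (real (chrom E) - lam_max E phi) / (real (chrom E) - 1)
        \<and> is_eigenfunction E phi (lam_min E phi) (gij g c i j))
    \<and> lam_min E phi = (real (chrom E) - lam_max E phi) / (real (chrom E) - 1)
    \<and> mult E phi (lam_min E phi) \<ge> chrom E - 1
    \<and> (mult E phi (lam_max E phi) > 1 \<longrightarrow> mult E phi (lam_min E phi) > chrom E - 1)"
proof -
  let ?k = "chrom E" and ?l = "lam_min E phi" and ?N = "lam_max E phi"
  have crange: "c v \<in> {1..?k}" for v using col unfolding proper_strong_coloring_def by simp
  have k2: "?k \<ge> 2"
  proof -
    obtain v w where a: "adj E phi v w \<noteq> 0" using Anz by blast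
    have "c v \<noteq> c w" using adj_same_color[OF col] a by metis
    thus ?thesis using crange[of v] crange[of w] by simp
  qed
  have ge: "lap E phi g = ?N *\<^sub>R g" and gnz: "g \<noteq> 0" using g_eig unfolding is_eigenfunction_def by auto
  have Nmem: "?N \<in> eigenvalues E phi" using g_eig unfolding eigenvalues_def by blast
  have lN: "?l \<le> ?N" by (rule lam_min_props(3)[OF hyp Nmem])
  have lt: "?l < 1"
  proof (rule ccontr)
    assume "\<not> ?l < 1"
    hence "?l = 1 \<or> ?l > 1" by linarith
    hence "(?N - ?l) / (1 - ?l) \<le> 0"
    proof
      assume "?l = 1" thus ?thesis by simp
    next
      assume "?l > 1" thus ?thesis using lN by (intro divide_nonneg_neg) auto
    qed
    thus False using chi_eq k2 by simp
  qed
  have ke: "real ?k * (1 - ?l) = ?N - ?l" using chi_eq lt by (simp add: field_simps)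
  have lf: "?l = (real ?k - ?N) / (real ?k - 1)"
  proof -
    have "real ?k - 1 > 0" using k2 by simp
    thus ?thesis using ke by (simp add: field_simps)
  qed
  have SUPP: "\<forall>i\<in>{1..?k}. \<exists>v. c v = i \<and> g $ v \<noteq> 0" by (rule supp[OF hyp col ge gnz ke lt])
  have P2: "Sg E phi g c i j < 0" if ij: "1 \<le> i \<and> i < j \<and> j \<le> ?k" for i j
  proof -
    have c0: "(1 - ?l) * (nrm E g c i + nrm E g c j) + 2 * Sg E phi g c i j = 0"
      using core[OF hyp col ge ke] ij by simp
    have iI: "i \<in> {1..?k}" using ij by simp
    obtain v where v: "c v = i" "g $ v \<noteq> 0" using bspec[OF SUPP iI] by blast
    have "nrm E g c i + nrm E g c j > 0"
      using nrm_pos[of E phi c v i g, OF hyp v] nrm_nonneg[OF hyp, of g c j] by simp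
    hence "(1 - ?l) * (nrm E g c i + nrm E g c j) > 0" using lt by simp
    thus ?thesis using c0 by simp
  qed
  have P3: "RQ E phi (gij g c i j) = ?l \<and> ?l = (real ?k - ?N) / (real ?k - 1)
        \<and> is_eigenfunction E phi ?l (gij g c i j)" if ij: "1 \<le> i \<and> i < j \<and> j \<le> ?k" for i j
  proof -
    have i: "i \<in> {1..?k}" and j: "j \<in> {1..?k}" and ne: "i \<noteq> j" using ij by auto
    note G = gij_eig[OF hyp col ge gnz ke lt i j ne]
    have "RQ E phi (gij g c i j) = ?l" unfolding RQ_def G(3) using G(2) by simp
    thus ?thesis using G(1) lf by simp
  qed
  have P5: "mult E phi ?l \<ge> ?k - 1"
  proof -
    let ?I = "{2..?k}"
    have "card ?I \<le> mult E phi ?l"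
    proof (rule card_le_mult[of ?I "\<lambda>j. gij g c 1 j"])
      show "finite ?I" by simp
    next
      fix j assume "j \<in> ?I"
      hence "1 \<in> {1..?k}" "j \<in> {1..?k}" "1 \<noteq> j" by auto
      from gij_eig(1)[OF hyp col ge gnz ke lt this]
      show "lap E phi (gij g c 1 j) = ?l *\<^sub>R gij g c 1 j" unfolding is_eigenfunction_def by simp
    next
      fix a assume s: "(\<Sum>j\<in>?I. a j *\<^sub>R gij g c 1 j) = 0"
      show "\<forall>j\<in>?I. a j = 0"
      proof
        fix m assume m: "m \<in> ?I"
        then obtain v where v: "c v = m" "g $ v \<noteq> 0" using SUPP by force
        have "(\<Sum>j\<in>?I. a j *\<^sub>R gij g c 1 j) $ v = (\<Sum>j\<in>?I. a j * (gij g c 1 j $ v))" by simp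
        hence c0: "(\<Sum>j\<in>?I. a j * (gij g c 1 j $ v)) = 0" using s by (metis zero_index)
        have "(\<Sum>j\<in>?I. a j * (gij g c 1 j $ v)) = a m * (gij g c 1 m $ v)"
          by (rule sum_single) (use m v in \<open>auto simp: gij_def\<close>)
        also have "\<dots> = - a m * g $ v" using m v by (simp add: gij_def)
        finally have "- a m * g $ v = 0" using c0 by simp
        thus "a m = 0" using v by simp
      qed
    qed
    thus ?thesis by simp
  qed
  have P6: "mult E phi ?l > ?k - 1" if mN: "mult E phi ?N > 1"
  proof -
    let ?W = "{f. lap E phi f = ?N *\<^sub>R f}"
    have "\<not> ?W \<subseteq> span {g}"
    proof
      assume "?W \<subseteq> span {g}"
      hence "dim ?W \<le> dim (span {g})" by (rule dim_subset)
      also have "\<dots> = dim {g}" by (rule dim_span)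
      also have "\<dots> \<le> card {g}" by (rule dim_le_card') simp
      finally have "dim ?W \<le> 1" by simp
      thus False using mN unfolding mult_def by simp
    qed
    then obtain h' where h'W: "lap E phi h' = ?N *\<^sub>R h'" and h'ns: "h' \<notin> span {g}" by auto
    obtain v0 where v0: "c v0 = 1" "g $ v0 \<noteq> 0" using SUPP k2 by force
    define t where "t = h' $ v0 / g $ v0"
    define h where "h = 1 *\<^sub>R h' + (- t) *\<^sub>R g"
    have he: "lap E phi h = ?N *\<^sub>R h" unfolding h_def lap_lin h'W ge by (simp add: algebra_simps)
    have hv0: "h $ v0 = 0" unfolding h_def t_def using v0 by simp
    have hnz: "h \<noteq> 0"
    proof
      assume "h = 0"
      hence "h' = t *\<^sub>R g" unfolding h_def by (simp add: algebra_simps)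
      hence "h' \<in> range (\<lambda>k. k *\<^sub>R g)" by (rule image_eqI) simp
      hence "h' \<in> span {g}" by (simp add: span_singleton)
      thus False using h'ns by simp
    qed
    have SUPPh: "\<forall>i\<in>{1..?k}. \<exists>v. c v = i \<and> h $ v \<noteq> 0" by (rule supp[OF hyp col he hnz ke lt])
    let ?I = "{1..?k}"
    define G where "G j = (if j = 1 then gij h c 1 2 else gij g c 1 j)" for j
    have "card ?I \<le> mult E phi ?l"
    proof (rule card_le_mult[of ?I G])
      show "finite ?I" by simp
    next
      fix j assume j: "j \<in> ?I"
      show "lap E phi (G j) = ?l *\<^sub>R G j"
      proof (cases "j = 1")
        case True
        have "1 \<in> {1..?k}" "2 \<in> {1..?k}" "(1::nat) \<noteq> 2" using k2 by auto
        from gij_eig(1)[OF hyp col he hnz ke lt this] True show ?thesis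
          unfolding is_eigenfunction_def G_def by simp
      next
        case False
        hence "1 \<in> {1..?k}" "j \<in> {1..?k}" "1 \<noteq> j" using j by auto
        from gij_eig(1)[OF hyp col ge gnz ke lt this] False show ?thesis
          unfolding is_eigenfunction_def G_def by simp
      qed
    next
      fix a assume s: "(\<Sum>j\<in>?I. a j *\<^sub>R G j) = 0"
      have comp: "(\<Sum>j\<in>?I. a j * (G j $ v)) = 0" for v
      proof -
        have "(\<Sum>j\<in>?I. a j *\<^sub>R G j) $ v = (\<Sum>j\<in>?I. a j * (G j $ v))" by simp
        thus ?thesis using s by (metis zero_index)
      qed
      have a3: "a m = 0" if m: "m \<in> {3..?k}" for m
      proof -
        obtain v where v: "c v = m" "g $ v \<noteq> 0" using SUPP m by force
        have "(\<Sum>j\<in>?I. a j * (G j $ v)) = a m * (G m $ v)"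
          by (rule sum_single) (use m v in \<open>auto simp: G_def gij_def\<close>)
        also have "\<dots> = - a m * g $ v" using m v by (simp add: G_def gij_def)
        finally have "- a m * g $ v = 0" using comp by simp
        thus "a m = 0" using v by simp
      qed
      have two: "(\<Sum>j\<in>?I. a j * (G j $ u)) = a 1 * h $ u + a 2 * g $ u" if u: "c u = 1" for u
      proof -
        have "(\<Sum>j\<in>?I. a j * (G j $ u)) = a 1 * (G 1 $ u) + a 2 * (G 2 $ u)"
        proof (rule sum_two)
          fix j assume "j \<in> ?I" "j \<noteq> 1" "j \<noteq> 2"
          hence "j \<in> {3..?k}" by auto
          thus "a j * (G j $ u) = 0" using a3 by simp
        qed (use k2 in auto)
        thus ?thesis using u by (simp add: G_def gij_def)
      qed
      have a2: "a 2 = 0" using two[OF v0(1)] comp[of v0] hv0 v0 by simp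
      obtain u where u: "c u = 1" "h $ u \<noteq> 0" using SUPPh k2 by force
      have a1: "a 1 = 0" using two[OF u(1)] comp[of u] a2 u by simp
      show "\<forall>j\<in>?I. a j = 0"
      proof
        fix j assume j: "j \<in> ?I"
        show "a j = 0"
        proof (cases "j = 1 \<or> j = 2")
          case True thus ?thesis using a1 a2 by auto
        next
          case False thus ?thesis using a3 j by simp
        qed
      qed
    qed
    thus ?thesis using k2 by simp
  qed
  show ?thesis using SUPP P2 P3 lf P5 P6 by simp
qed

end
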